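(* Let $C$ be any logistic circuit structure over Boolean variables $X_1,\dots,X_k$, with parameter vector $\theta\in\mathbb{R}^m$ collecting its $m$ OR-gate wire parameters. Then there exists a feature map $\phi:[0,1]^k\to\mathbb{R}^{m'}$ depending only on the input $\mathbf{x}$ and the structure of $C$ (not on the parameters), and a linear correspondence by which the logistic circuit is a logistic regression model over these features: for every parameter setting, $\Pr(Y=1\mid\mathbf{x}) = 1/(1+\exp(-\phi(\mathbf{x})\cdot\theta'))$ for all $\mathbf{x}\in[0,1]^k$, where $\theta'$ is a vector whose entries are parameters of the circuit. That is, any logistic circuit model can be reduced to a logistic regression model over a particular feature set.
   Context: A logical circuit over Boolean variables $X_1,\dots,X_k$ is a rooted directed acyclic graph whose leaves are literals $X_i$ or $\neg X_i$ and whose inner nodes are AND gates or OR gates; each node represents a logical sentence. An AND gate is decomposable if its inputs mention pairwise disjoint sets of variables; an OR gate is deterministic if for every complete assignment at most one of its inputs is satisfied. A logistic circuit is a logical circuit whose root is an OR gate, with all AND gates decomposable and all OR gates deterministic, together with a real parameter on each input wire of each OR gate. For $\mathbf{x}\in[0,1]^k$, $\Pr_{\mathbf{x}}$ is the fully factorized distribution with $\Pr_{\mathbf{x}}(X_i=1)=x_i$, and $\Pr_{\mathbf{x}}(n)$ is the probability of the sentence of node $n$. For an OR gate $n$ with child $c$, the flow is $f(n,\mathbf{x},c)=\Pr_{\mathbf{x}}(c)/\Pr_{\mathbf{x}}(n)$ (taken to be $0$ if $\Pr_{\mathbf{x}}(n)=0$). The weight function: $g_n(\mathbf{x})=0$ for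 a leaf; $g_n(\mathbf{x})=\sum_i g_{c_i}(\mathbf{x})$ for an AND gate with children $c_i$; $g_n(\mathbf{x})=\sum_i f(n,\mathbf{x},c_i)(g_{c_i}(\mathbf{x})+\theta_i)$ for an OR gate with inputs $(c_i,\theta_i)$. With root $r$, $\Pr(Y=1\mid\mathbf{x})=1/(1+\exp(-g_r(\mathbf{x})))$. *)

theory Defs
  imports Complex_Main
begin

text \<open>A logical circuit is encoded as a DAG on nodes numbered by naturals: every
  node n is labelled by a gate, and every child of n has a smaller number
  (a topological numbering; every finite DAG admits one).  An OR gate lists its
  inputs as pairs (child, wire index j); the parameter of that wire is theta j.
  Variables X_1..X_k are the indices 1..k.\<close>

datatype gate =
    Lit nat bool              \<comment> \<open>Lit i True is X_i, Lit i False is the negation of X_i\<close>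
  | AndG "nat list"
  | OrG "(nat \<times> nat) list"

type_synonym circuit = "nat \<Rightarrow> gate"

definition children :: "gate \<Rightarrow> nat list" where
  "children g = (case g of Lit _ _ \<Rightarrow> [] | AndG cs \<Rightarrow> cs | OrG cs \<Rightarrow> map fst cs)"

function sat :: "circuit \<Rightarrow> nat \<Rightarrow> (nat \<Rightarrow> bool) \<Rightarrow> bool" where
  "sat C n a = (case C n of
      Lit i b \<Rightarrow> (a i = b)
    | AndG cs \<Rightarrow> (\<forall>c\<in>set cs. c < n \<longrightarrow> sat C c a)
    | OrG cs \<Rightarrow> (\<exists>p\<in>set cs. if fst p < n then sat C (fst p) a else False))"
  by pat_completeness auto
termination by (relation "measure (\<lambda>(C,n,a). n)") auto

function vars :: "circuit \<Rightarrow> nat \<Rightarrow> nat set" where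
  "vars C n = (case C n of
      Lit i b \<Rightarrow> {i}
    | AndG cs \<Rightarrow> (\<Union>c\<in>set cs. if c < n then vars C c else {})
    | OrG cs \<Rightarrow> (\<Union>p\<in>set cs. if fst p < n then vars C (fst p) else {}))"
  by pat_completeness auto
termination by (relation "measure (\<lambda>(C,n). n)") auto

inductive_set nodes :: "circuit \<Rightarrow> nat \<Rightarrow> nat set" for C r where
  root: "r \<in> nodes C r"
| child: "n \<in> nodes C r \<Longrightarrow> c \<in> set (children (C n)) \<Longrightarrow> c \<in> nodes C r"

definition logistic_circuit :: "circuit \<Rightarrow> nat \<Rightarrow> nat \<Rightarrow> nat \<Rightarrow> bool" where
  "logistic_circuit C k m r \<longleftrightarrow>
     (\<exists>cs. C r = OrG cs) \<and>
     (\<forall>n\<in>nodes C r.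
        (\<forall>c\<in>set (children (C n)). c < n) \<and>
        (\<forall>i b. C n = Lit i b \<longrightarrow> i \<in> {1..k}) \<and>
        (\<forall>cs. C n = AndG cs \<longrightarrow>
           (\<forall>i<length cs. \<forall>j<length cs. i \<noteq> j \<longrightarrow> vars C (cs!i) \<inter> vars C (cs!j) = {})) \<and>
        (\<forall>cs. C n = OrG cs \<longrightarrow>
           (\<forall>p\<in>set cs. snd p < m) \<and>
           (\<forall>S\<subseteq>{1..k}. \<forall>i<length cs. \<forall>j<length cs. i \<noteq> j \<longrightarrow>
              \<not> (sat C (fst (cs!i)) (\<lambda>v. v \<in> S) \<and> sat C (fst (cs!j)) (\<lambda>v. v \<in> S)))))"

text \<open>Probability of the sentence of node n under the fully factorized
  distribution with Pr(X_i = 1) = x i; complete assignments are subsets S of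
  {1..k} (the variables set to true).\<close>
definition prob :: "circuit \<Rightarrow> nat \<Rightarrow> (nat \<Rightarrow> real) \<Rightarrow> nat \<Rightarrow> real" where
  "prob C k x n = (\<Sum>S\<in>Pow {1..k}.
      (if sat C n (\<lambda>v. v \<in> S) then (\<Prod>i\<in>S. x i) * (\<Prod>i\<in>{1..k} - S. 1 - x i) else 0))"

definition flow :: "circuit \<Rightarrow> nat \<Rightarrow> (nat \<Rightarrow> real) \<Rightarrow> nat \<Rightarrow> nat \<Rightarrow> real" where
  "flow C k x n c = (if prob C k x n = 0 then 0 else prob C k x c / prob C k x n)"

function weight :: "circuit \<Rightarrow> nat \<Rightarrow> (nat \<Rightarrow> real) \<Rightarrow> (nat \<Rightarrow> real) \<Rightarrow> nat \<Rightarrow> real" where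
  "weight C k \<theta> x n = (case C n of
      Lit i b \<Rightarrow> 0
    | AndG cs \<Rightarrow> (\<Sum>c\<leftarrow>cs. if c < n then weight C k \<theta> x c else 0)
    | OrG cs \<Rightarrow> (\<Sum>p\<leftarrow>cs. if fst p < n
                 then flow C k x n (fst p) * (weight C k \<theta> x (fst p) + \<theta> (snd p)) else 0))"
  by pat_completeness auto
termination by (relation "measure (\<lambda>(C,k,\<theta>,x,n). n)") auto

definition lc_prob :: "circuit \<Rightarrow> nat \<Rightarrow> (nat \<Rightarrow> real) \<Rightarrow> nat \<Rightarrow> (nat \<Rightarrow> real) \<Rightarrow> real" where
  "lc_prob C k \<theta> r x = 1 / (1 + exp (- weight C k \<theta> x r))"

definition unit_cube :: "nat \<Rightarrow> (nat \<Rightarrow> real) set" where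
  "unit_cube k = {x. \<forall>i\<in>{1..k}. 0 \<le> x i \<and> x i \<le> 1}"

end

theory Submission
  imports Defs
begin

lemma sl_swap: "(\<Sum>p\<leftarrow>cs. \<Sum>j<m. g p j) = (\<Sum>j<m. \<Sum>p\<leftarrow>cs. (g p j::real))"
  by (induction cs) (auto simp: sum.distrib)

lemma sl_cong: "(\<And>p. p \<in> set cs \<Longrightarrow> f p = g p) \<Longrightarrow> sum_list (map f cs) = sum_list (map g cs)"
  by (metis map_cong)

lemma sl_mult: "(\<Sum>p\<leftarrow>cs. c * f p) = (c::real) * (\<Sum>p\<leftarrow>cs. f p)"
  by (induction cs) (auto simp: algebra_simps)

lemma weight_lin:
  assumes lc: "logistic_circuit C k m r"
  shows "n \<in> nodes C r \<Longrightarrow> weight C k \<theta> x n =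
     (\<Sum>j<m. \<theta> j * weight C k (\<lambda>i. if i = j then 1 else 0) x n)"
proof (induction n rule: less_induct)
  case (less n)
  have chn: "\<And>c. c \<in> set (children (C n)) \<Longrightarrow> c \<in> nodes C r"
    using less.prems nodes.child by blast
  have props: "(\<forall>cs. C n = OrG cs \<longrightarrow> (\<forall>p\<in>set cs. snd p < m))"
    using lc less.prems unfolding logistic_circuit_def by blast
  show ?case
  proof (cases "C n")
    case (Lit i b)
    then show ?thesis by (subst (1 2) weight.simps) simp
  next
    case (AndG cs)
    have "weight C k \<theta> x n = (\<Sum>c\<leftarrow>cs. if c < n then weight C k \<theta> x c else 0)"
      by (subst weight.simps) (simp add: AndG)
    also have "\<dots> = (\<Sum>c\<leftarrow>cs. \<Sum>j<m. \<theta> j * (if c < n then weight C k (\<lambda>i. if i = j then 1 else 0) x c else 0))"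
    proof (rule sl_cong)
      fix c assume c: "c \<in> set cs"
      then have "c \<in> nodes C r" using chn AndG by (simp add: children_def)
      then show "(if c < n then weight C k \<theta> x c else 0) = (\<Sum>j<m. \<theta> j * (if c < n then weight C k (\<lambda>i. if i = j then 1 else 0) x c else 0))"
        using less.IH by auto
    qed
    also have "\<dots> = (\<Sum>j<m. \<theta> j * (\<Sum>c\<leftarrow>cs. (if c < n then weight C k (\<lambda>i. if i = j then 1 else 0) x c else 0)))"
      by (simp add: sl_swap sl_mult)
    also have "\<dots> = (\<Sum>j<m. \<theta> j * weight C k (\<lambda>i. if i = j then 1 else 0) x n)"
      by (rule sum.cong) (auto simp: weight.simps[of C k _ x n] AndG)
    finally show ?thesis .
  next
    case (OrG cs)
    have "weight C k \<theta> x n = (\<Sum>p\<leftarrow>cs. if fst p < n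
                 then flow C k x n (fst p) * (weight C k \<theta> x (fst p) + \<theta> (snd p)) else 0)"
      by (subst weight.simps) (simp add: OrG)
    also have "\<dots> = (\<Sum>p\<leftarrow>cs. \<Sum>j<m. \<theta> j * (if fst p < n
                 then flow C k x n (fst p) * (weight C k (\<lambda>i. if i = j then 1 else 0) x (fst p) + (if snd p = j then 1 else 0)) else 0))"
    proof (rule sl_cong)
      fix p assume p: "p \<in> set cs"
      then have pn: "fst p \<in> nodes C r" using chn OrG by (simp add: children_def)
      have sm: "snd p < m" using props OrG p by auto
      have th: "\<theta> (snd p) = (\<Sum>j<m. \<theta> j * (if snd p = j then 1 else 0))"
        using sm by (simp add: if_distrib cong: if_cong)
      show "(if fst p < n then flow C k x n (fst p) * (weight C k \<theta> x (fst p) + \<theta> (snd p)) else 0) =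
         (\<Sum>j<m. \<theta> j * (if fst p < n
                 then flow C k x n (fst p) * (weight C k (\<lambda>i. if i = j then 1 else 0) x (fst p) + (if snd p = j then 1 else 0)) else 0))"
      proof (cases "fst p < n")
        case True
        have "weight C k \<theta> x (fst p) + \<theta> (snd p) = (\<Sum>j<m. \<theta> j * (weight C k (\<lambda>i. if i = j then 1 else 0) x (fst p) + (if snd p = j then 1 else 0)))"
          using less.IH[OF True pn] th by (simp add: algebra_simps sum.distrib)
        then show ?thesis using True by (simp add: sum_distrib_left algebra_simps)
      qed simp
    qed
    also have "\<dots> = (\<Sum>j<m. \<theta> j * (\<Sum>p\<leftarrow>cs. (if fst p < n
                 then flow C k x n (fst p) * (weight C k (\<lambda>i. if i = j then 1 else 0) x (fst p) + (if snd p = j then 1 else 0)) else 0)))"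
      by (simp add: sl_swap sl_mult)
    also have "\<dots> = (\<Sum>j<m. \<theta> j * weight C k (\<lambda>i. if i = j then 1 else 0) x n)"
      by (rule sum.cong) (auto simp: weight.simps[of C k _ x n] OrG)
    finally show ?thesis .
  qed
qed

theorem proposition2:
  fixes C :: circuit and k m r :: nat
  assumes "logistic_circuit C k m r"
  shows "\<exists>(m'::nat) (\<phi> :: (nat \<Rightarrow> real) \<Rightarrow> nat \<Rightarrow> real) (\<sigma> :: nat \<Rightarrow> nat).
           (\<forall>i<m'. \<sigma> i < m) \<and>
           (\<forall>\<theta> :: nat \<Rightarrow> real. \<forall>x\<in>unit_cube k.
              lc_prob C k \<theta> r x = 1 / (1 + exp (- (\<Sum>i<m'. \<phi> x i * \<theta> (\<sigma> i)))))"
proof -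
  have "\<forall>\<theta> :: nat \<Rightarrow> real. \<forall>x\<in>unit_cube k.
    lc_prob C k \<theta> r x = 1 / (1 + exp (- (\<Sum>i<m. weight C k (\<lambda>i'. if i' = i then 1 else 0) x r * \<theta> (id i))))"
    unfolding lc_prob_def using weight_lin[OF assms nodes.root]
    by (simp add: mult.commute)
  moreover have "\<forall>i<m. id i < m" by simp
  ultimately show ?thesis
    by (intro exI[of _ m] exI[of _ "\<lambda>x i. weight C k (\<lambda>i'. if i' = i then 1 else 0) x r"] exI[of _ id] conjI)
qed

end
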